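(* Let $S_t$ be the state at time $t$ of a $d$-dimensional Hegselmann–Krause system with social network $G=(V,E)$ and confidence bound $\varepsilon>0$. Suppose agent $v$ is updated in step $t$ (so it moves by $m_v(t)$), producing the state $S_{t+1}$. Then $$\Phi(S_t)-\Phi(S_{t+1})\ \ge\ (|N_v(t)|+1)\,\|m_v(t)\|_2^2,$$ with equality if the influence network in $S_{t+1}$ equals the influence network in $S_t$.
   Context: A $d$-dimensional Hegselmann–Krause system has a finite undirected graph $G=(V,E)$ (social network), a confidence bound $\varepsilon>0$, and positions $x_v(t)\in\mathbb{R}^d$ at time $t$. The influencing neighborhood is $N_v(t)=\{u:\{u,v\}\in E,\ \|x_u(t)-x_v(t)\|_2\le\varepsilon\}\cup\{v\}$, the movement is $m_v(t)=\frac{1}{|N_v(t)|}\sum_{u\in N_v(t)}(x_u(t)-x_v(t))$, and the influence network at time $t$ is $(V,E_I(t))$ with $E_I(t)=\{\{u,v\}\in E:\|x_u(t)-x_v(t)\|_2\le\varepsilon\}$. Updating $v$ in step $t$ means $x_v(t+1)=x_v(t)+m_v(t)$ and $x_u(t+1)=x_u(t)$ for $u\ne v$. The potential of a state $S$ with positions $x$ is $\Phi(S)=\sum_{\{u,v\}\in E}\min\{\|x_u-x_v\|_2^2,\varepsilon^2\}$. *)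

theory Defs
  imports "HOL-Analysis.Analysis"
begin

definition graph :: "'v set \<Rightarrow> 'v set set \<Rightarrow> bool" where
  "graph V E \<longleftrightarrow> finite V \<and> (\<forall>e\<in>E. e \<subseteq> V \<and> card e = 2)"

definition hk_nbhd :: "'v set set \<Rightarrow> real \<Rightarrow> ('v \<Rightarrow> 'a::euclidean_space) \<Rightarrow> 'v \<Rightarrow> 'v set" where
  "hk_nbhd E eps x v = {u. {u, v} \<in> E \<and> norm (x u - x v) \<le> eps} \<union> {v}"

definition hk_move :: "'v set set \<Rightarrow> real \<Rightarrow> ('v \<Rightarrow> 'a::euclidean_space) \<Rightarrow> 'v \<Rightarrow> 'a" where
  "hk_move E eps x v =
     (1 / real (card (hk_nbhd E eps x v))) *\<^sub>R (\<Sum>u\<in>hk_nbhd E eps x v. x u - x v)"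

definition hk_update :: "'v set set \<Rightarrow> real \<Rightarrow> ('v \<Rightarrow> 'a::euclidean_space) \<Rightarrow> 'v \<Rightarrow> ('v \<Rightarrow> 'a)" where
  "hk_update E eps x v = x(v := x v + hk_move E eps x v)"

definition influence_edges :: "'v set set \<Rightarrow> real \<Rightarrow> ('v \<Rightarrow> 'a::euclidean_space) \<Rightarrow> 'v set set" where
  "influence_edges E eps x = {e \<in> E. \<forall>u\<in>e. \<forall>w\<in>e. norm (x u - x w) \<le> eps}"

definition hk_potential :: "'v set set \<Rightarrow> real \<Rightarrow> ('v \<Rightarrow> 'a::euclidean_space) \<Rightarrow> real" where
  "hk_potential E eps x =
     (\<Sum>e\<in>E. min ((SOME d. \<exists>u w. e = {u, w} \<and> u \<noteq> w \<and> d = (norm (x u - x w))\<^sup>2)) (eps\<^sup>2))"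

end

theory Submission
  imports Defs
begin

lemma some_pair:
  assumes "u \<noteq> w"
  shows "(SOME d. \<exists>a b. {u,w} = {a,b} \<and> a \<noteq> b \<and> d = (norm (x a - x b))\<^sup>2) = (norm (x u - x w))\<^sup>2"
proof (rule some_equality)
  show "\<exists>a b. {u,w} = {a,b} \<and> a \<noteq> b \<and> (norm (x u - x w))\<^sup>2 = (norm (x a - x b))\<^sup>2"
    using assms by blast
next
  fix d assume "\<exists>a b. {u,w} = {a,b} \<and> a \<noteq> b \<and> d = (norm (x a - x b))\<^sup>2"
  then obtain a b where "{u,w} = {a,b}" "d = (norm (x a - x b))\<^sup>2" by blast
  then show "d = (norm (x u - x w))\<^sup>2"
    by (auto simp: doubleton_eq_iff norm_minus_commute)
qed

lemma key:
  fixes a :: "'v \<Rightarrow> 'a::real_inner"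
  assumes "finite N" and "m = (1 / (real (card N) + 1)) *\<^sub>R sum a N"
  shows "(\<Sum>u\<in>N. (norm (a u))\<^sup>2 - (norm (a u - m))\<^sup>2) = (real (card N) + 2) * (norm m)\<^sup>2"
proof -
  have s: "sum a N = (real (card N) + 1) *\<^sub>R m" using assms(2) by simp
  have "(\<Sum>u\<in>N. (norm (a u))\<^sup>2 - (norm (a u - m))\<^sup>2) = (\<Sum>u\<in>N. 2 * (a u \<bullet> m) - (norm m)\<^sup>2)"
    by (rule sum.cong) (auto simp: power2_norm_eq_inner inner_diff_left inner_diff_right inner_commute)
  also have "\<dots> = 2 * (sum a N \<bullet> m) - real (card N) * (norm m)\<^sup>2"
    by (simp add: sum_subtractf sum_distrib_left inner_sum_left)
  also have "\<dots> = (real (card N) + 2) * (norm m)\<^sup>2"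
    unfolding s by (simp add: power2_norm_eq_inner algebra_simps)
  finally show ?thesis .
qed


theorem lemma3:
  fixes V :: "'v set" and E :: "'v set set" and eps :: real
    and x :: "'v \<Rightarrow> 'a::euclidean_space" and v :: 'v
  assumes "graph V E" and "eps > 0" and "v \<in> V"
  shows "(hk_potential E eps x - hk_potential E eps (hk_update E eps x v)
           \<ge> real (card (hk_nbhd E eps x v) + 1) * (norm (hk_move E eps x v))\<^sup>2)
     \<and> (influence_edges E eps (hk_update E eps x v) = influence_edges E eps x \<longrightarrow>
         hk_potential E eps x - hk_potential E eps (hk_update E eps x v)
           = real (card (hk_nbhd E eps x v) + 1) * (norm (hk_move E eps x v))\<^sup>2)"
proof -
  define m where "m = hk_move E eps x v"
  define x' where "x' = hk_update E eps x v"
  have x'u: "x' u = x u" if "u \<noteq> v" for u using that by (simp add: x'_def hk_update_def)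
  have x'v: "x' v = x v + m" by (simp add: x'_def hk_update_def m_def)
  have finV: "finite V" and Ecard: "\<And>e. e \<in> E \<Longrightarrow> e \<subseteq> V \<and> card e = 2"
    using assms(1) by (auto simp: graph_def)
  have finE: "finite E"
    by (rule finite_subset[of E "Pow V"]) (use Ecard finV in auto)
  define t :: "('v \<Rightarrow> 'a) \<Rightarrow> 'v set \<Rightarrow> real" where "t y e = min (SOME d. \<exists>u w. e = {u, w} \<and> u \<noteq> w \<and> d = (norm (y u - y w))\<^sup>2) (eps\<^sup>2)" for y e
  have Pdef: "hk_potential E eps y = sum (t y) E" for y by (simp add: hk_potential_def t_def)
  have tpair: "t y {u,w} = min ((norm (y u - y w))\<^sup>2) (eps\<^sup>2)" if "u \<noteq> w" for y u w
    unfolding t_def using some_pair[OF that, of y] by simp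
  define U where "U = {u. {u, v} \<in> E}"
  have vU: "v \<notin> U" using Ecard unfolding U_def by fastforce
  have finU: "finite U"
    by (rule finite_subset[of U V]) (use Ecard U_def finV in auto)
  define h :: "('v \<Rightarrow> 'a) \<Rightarrow> 'v \<Rightarrow> real" where "h y u = min ((norm (y u - y v))\<^sup>2) (eps\<^sup>2)" for y u
  have Ev: "E \<inter> {e. v \<in> e} = (\<lambda>u. {u, v}) ` U" unfolding U_def
  proof (intro equalityI subsetI)
    fix e assume "e \<in> E \<inter> {e. v \<in> e}"
    then have "e \<in> E" "v \<in> e" by auto
    then obtain a b where "e = {a,b}" "a \<noteq> b" using Ecard by (meson card_2_iff)
    then show "e \<in> (\<lambda>u. {u, v}) ` {u. {u, v} \<in> E}" using \<open>e \<in> E\<close> \<open>v \<in> e\<close>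
      by (auto simp: insert_commute image_iff)
  qed auto
  have inj: "inj_on (\<lambda>u. {u, v}) U" using vU by (auto simp: inj_on_def doubleton_eq_iff)
  have incid: "sum (t y) (E \<inter> {e. v \<in> e}) = sum (h y) U" for y
    unfolding Ev sum.reindex[OF inj] o_def
    by (rule sum.cong) (use vU in \<open>auto simp: h_def intro!: tpair\<close>)
  have rest: "sum (t x') (E - {e. v \<in> e}) = sum (t x) (E - {e. v \<in> e})"
  proof (rule sum.cong)
    fix e assume "e \<in> E - {e. v \<in> e}"
    then obtain a b where "e = {a,b}" "a \<noteq> b" "a \<noteq> v" "b \<noteq> v" using Ecard by (metis DiffD1 DiffD2 card_2_iff insertCI mem_Collect_eq)
    then show "t x' e = t x e" by (simp add: tpair x'u)
  qed simp
  have split: "sum (t y) E = sum (t y) (E \<inter> {e. v \<in> e}) + sum (t y) (E - {e. v \<in> e})" for y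
    using finE by (simp add: sum.Int_Diff)
  have diff: "hk_potential E eps x - hk_potential E eps x' = (\<Sum>u\<in>U. h x u - h x' u)"
    unfolding Pdef using split[of x] split[of x'] rest incid[of x] incid[of x'] by (simp add: sum_subtractf)
  define N' where "N' = {u\<in>U. norm (x u - x v) \<le> eps}"
  have finN': "finite N'" using finU N'_def by simp
  have vN': "v \<notin> N'" using vU N'_def by simp
  have Nb: "hk_nbhd E eps x v = insert v N'" by (auto simp: hk_nbhd_def N'_def U_def)
  have cardN: "card (hk_nbhd E eps x v) = card N' + 1" using Nb finN' vN' by simp
  have mdef: "m = (1 / (real (card N') + 1)) *\<^sub>R sum (\<lambda>u. x u - x v) N'"
    unfolding m_def hk_move_def cardN Nb using finN' vN' by simp
  have K: "(\<Sum>u\<in>N'. (norm (x u - x v))\<^sup>2 - (norm (x u - x v - m))\<^sup>2) = (real (card N') + 2) * (norm m)\<^sup>2"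
    by (rule key[OF finN' mdef])
  have hx'N: "h x' u = min ((norm (x u - x v - m))\<^sup>2) (eps\<^sup>2)" if "u \<in> U" for u
  proof -
    have "u \<noteq> v" using that vU by auto
    then show ?thesis by (simp add: h_def x'u x'v algebra_simps)
  qed
  have Usplit: "(\<Sum>u\<in>U. h x u - h x' u) = (\<Sum>u\<in>N'. h x u - h x' u) + (\<Sum>u\<in>U - N'. h x u - h x' u)"
    using finU by (metis (no_types, lifting) N'_def mem_Collect_eq subsetI sum.subset_diff add.commute)
  have hxN: "h x u = (norm (x u - x v))\<^sup>2" if "u \<in> N'" for u
  proof -
    have "norm (x u - x v) \<le> eps" using that N'_def by simp
    then have "(norm (x u - x v))\<^sup>2 \<le> eps\<^sup>2" by (simp add: power_mono)
    then show ?thesis by (simp add: h_def)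
  qed
  have hxU: "h x u = eps\<^sup>2" if "u \<in> U - N'" for u
  proof -
    have "norm (x u - x v) > eps" using that N'_def by auto
    then have "(norm (x u - x v))\<^sup>2 \<ge> eps\<^sup>2" using assms(2) by (simp add: power_mono)
    then show ?thesis by (simp add: h_def)
  qed
  have ge1: "(\<Sum>u\<in>N'. h x u - h x' u) \<ge> (\<Sum>u\<in>N'. (norm (x u - x v))\<^sup>2 - (norm (x u - x v - m))\<^sup>2)"
    by (rule sum_mono) (use hxN hx'N N'_def in auto)
  have ge2: "(\<Sum>u\<in>U - N'. h x u - h x' u) \<ge> 0"
    by (rule sum_nonneg) (use hxU h_def in auto)
  have part1: "hk_potential E eps x - hk_potential E eps x' \<ge> real (card (hk_nbhd E eps x v) + 1) * (norm m)\<^sup>2"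
  proof -
    have "real (card (hk_nbhd E eps x v) + 1) * (norm m)\<^sup>2 = (real (card N') + 2) * (norm m)\<^sup>2" using cardN by simp
    then show ?thesis using diff Usplit ge1 ge2 K by linarith
  qed
  have part2: "hk_potential E eps x - hk_potential E eps x' = real (card (hk_nbhd E eps x v) + 1) * (norm m)\<^sup>2"
    if eq: "influence_edges E eps x' = influence_edges E eps x"
  proof -
    have c1: "norm (x u - x v - m) \<le> eps" if "u \<in> N'" for u
    proof -
      have "{u,v} \<in> influence_edges E eps x" using that N'_def U_def assms(2)
        by (auto simp: influence_edges_def norm_minus_commute)
      then have "{u,v} \<in> influence_edges E eps x'" using eq by simp
      then have "norm (x' u - x' v) \<le> eps" by (auto simp: influence_edges_def)
      moreover have "u \<noteq> v" using that vN' by auto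
      ultimately show ?thesis by (simp add: x'u x'v algebra_simps)
    qed
    have c2: "norm (x u - x v - m) > eps" if "u \<in> U - N'" for u
    proof -
      have "{u,v} \<notin> influence_edges E eps x" using that N'_def U_def
        by (auto simp: influence_edges_def)
      then have "{u,v} \<notin> influence_edges E eps x'" using eq by simp
      then have "\<not> norm (x' u - x' v) \<le> eps" using that U_def assms(2)
        by (auto simp: influence_edges_def norm_minus_commute)
      moreover have "u \<noteq> v" using that vU by auto
      ultimately show ?thesis by (simp add: x'u x'v algebra_simps)
    qed
    have e1: "(\<Sum>u\<in>N'. h x u - h x' u) = (\<Sum>u\<in>N'. (norm (x u - x v))\<^sup>2 - (norm (x u - x v - m))\<^sup>2)"
    proof (rule sum.cong)
      fix u assume u: "u \<in> N'"
      have "(norm (x u - x v - m))\<^sup>2 \<le> eps\<^sup>2" using c1[OF u] by (simp add: power_mono)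
      then show "h x u - h x' u = (norm (x u - x v))\<^sup>2 - (norm (x u - x v - m))\<^sup>2"
        using hxN[OF u] hx'N[of u] u N'_def by simp
    qed simp
    have e2: "(\<Sum>u\<in>U - N'. h x u - h x' u) = 0"
    proof (rule sum.neutral, rule ballI)
      fix u assume u: "u \<in> U - N'"
      have "(norm (x u - x v - m))\<^sup>2 \<ge> eps\<^sup>2" using c2[OF u] assms(2) by (simp add: power_mono)
      then show "h x u - h x' u = 0" using hxU[OF u] hx'N[of u] u by simp
    qed
    have "real (card (hk_nbhd E eps x v) + 1) * (norm m)\<^sup>2 = (real (card N') + 2) * (norm m)\<^sup>2" using cardN by simp
    then show ?thesis using diff Usplit e1 e2 K by linarith
  qed
  show ?thesis using part1 part2 unfolding m_def x'_def by blast
qed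

end
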